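(* Let $X$ be a compact topological space, let $D\subseteq X$, let $\overline{D}$ be the closure of $D$ in $X$, and put $\partial D:=\overline{D}\setminus D$. Let $Y$ be a Hausdorff topological space and let $f\colon\overline{D}\to Y$ be a continuous map such that $f(D)$ is open in $Y$. Let $E$ be any connected subset of $Y\setminus f(\partial D)$. Then either $E\subseteq f(D)$ or $f(\overline{D})\subseteq Y\setminus E$.
   Context: Note that $\partial D$ is defined as $\overline{D}\setminus D$ (which coincides with the usual boundary when $D$ is open). *)

theory Defs
  imports "HOL-Analysis.Analysis"
begin

end

theory Submission
  imports Defs
begin
theorem mainTheorem1:
  fixes X :: "'a topology" and Y :: "'b topology"
    and D :: "'a set" and f :: "'a \<Rightarrow> 'b" and E :: "'b set"
  assumes "compact_space X"
    and "D \<subseteq> topspace X"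
    and "Hausdorff_space Y"
    and "continuous_map (subtopology X (X closure_of D)) Y f"
    and "openin Y (f ` D)"
    and "connectedin Y E"
    and "E \<subseteq> topspace Y - f ` (X closure_of D - D)"
  shows "E \<subseteq> f ` D \<or> f ` (X closure_of D) \<subseteq> topspace Y - E"
proof -
  let ?C = "X closure_of D"
  have DC: "D \<subseteq> ?C" using assms(2) by (rule closure_of_subset)
  have "compactin X ?C" using assms(1) by (rule closedin_compact_space) simp
  hence "compactin (subtopology X ?C) ?C"
    by (simp add: compactin_subtopology)
  hence "compactin Y (f ` ?C)" using assms(4) by (rule image_compactin)
  hence Kc: "closedin Y (f ` ?C)" using assms(3) compactin_imp_closedin by blast
  have KY: "f ` ?C \<subseteq> topspace Y"
    using \<open>compactin Y (f ` ?C)\<close> compactin_subset_topspace by blast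
  have eq: "E \<inter> f ` ?C = E \<inter> f ` D" using assms(7) DC by blast
  have cE: "connectedin (subtopology Y E) E"
    using assms(6) by (simp add: connectedin_subtopology)
  have o: "openin (subtopology Y E) (E \<inter> f ` D)"
    using openin_subtopology_Int2[OF assms(5), of E] by (simp add: Int_commute)
  have c: "closedin (subtopology Y E) (E \<inter> f ` D)"
    using Kc eq closedin_subtopology_Int_closed by (metis inf_commute)
  from connectedin_clopen_cases[OF cE c o] have "E \<subseteq> E \<inter> f ` D \<or> disjnt E (E \<inter> f ` D)" .
  thus ?thesis using eq KY unfolding disjnt_def by blast
qed
end
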